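(* Let $k$ be a positive integer, $a_1>a_2>\cdots>a_n$ real numbers in $[a,b]$, and $w_1,\dots,w_n$ real weights such that $\sum_{i=1}^n w_ia_i^j=0$ for all integers $0\le j<k$ and \[ \sum_{i=1}^j w_i(a_i-a_{j+1})(a_i-a_{j+2})\cdots(a_i-a_{j+k-1})\ge 0\quad\text{for all }1\le j\le n-k \] (the product has $k-1$ factors; it is empty, i.e. equal to $1$, when $k=1$). Then $\sum_{i=1}^n w_if(a_i)\ge 0$ for every $k$ times differentiable $f:[a,b]\to\mathbb{R}$ with $f^{(k)}\ge 0$. *)

theory Defs
  imports "HOL-Analysis.Analysis"
begin

end

theory Submission
  imports Defs
begin

lemma gen_rolle:
  fixes H :: "nat \<Rightarrow> real \<Rightarrow> real" and a b :: real and z :: "nat \<Rightarrow> real"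
  assumes deriv: "\<And>m t. m < k \<Longrightarrow> t \<in> {a..b} \<Longrightarrow> (H m has_real_derivative H (Suc m) t) (at t within {a..b})"
    and zin: "\<And>i. i \<le> k \<Longrightarrow> z i \<in> {a..b}"
    and zdec: "\<And>i j. i < j \<Longrightarrow> j \<le> k \<Longrightarrow> z j < z i"
    and z0: "\<And>i. i \<le> k \<Longrightarrow> H 0 (z i) = 0"
  shows "\<exists>\<xi>\<in>{a..b}. H k \<xi> = 0"
proof -
  have "m \<le> k \<Longrightarrow> \<exists>z. (\<forall>i\<le>k-m. z i \<in> {a..b}) \<and> (\<forall>i j. i<j \<longrightarrow> j \<le> k-m \<longrightarrow> z j < z i) \<and> (\<forall>i\<le>k-m. H m (z i) = 0)" for m
  proof (induction m)
    case 0 then show ?case using zin zdec z0 by auto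
  next
    case (Suc m)
    then obtain z where zi: "\<forall>i\<le>k-m. z i \<in> {a..b}" and zd: "\<forall>i j. i<j \<longrightarrow> j \<le> k-m \<longrightarrow> z j < z i"
      and zz: "\<forall>i\<le>k-m. H m (z i) = 0" by auto
    have "\<forall>i. \<exists>\<zeta>. i < k - m \<longrightarrow> z (Suc i) < \<zeta> \<and> \<zeta> < z i \<and> H (Suc m) \<zeta> = 0"
    proof
      fix i
      show "\<exists>\<zeta>. i < k - m \<longrightarrow> z (Suc i) < \<zeta> \<and> \<zeta> < z i \<and> H (Suc m) \<zeta> = 0"
      proof (cases "i < k - m")
        case False then show ?thesis by auto
      next
        case i: True
        have ab: "z (Suc i) < z i" using zd i by auto
        have ia: "z (Suc i) \<in> {a..b}" "z i \<in> {a..b}" using zi i by auto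
        have sub: "{z (Suc i)..z i} \<subseteq> {a..b}" using ia by auto
        have mk: "m < k" using Suc.prems by auto
        have cont: "continuous_on {z (Suc i)..z i} (H m)"
          apply (rule DERIV_continuous_on[of _ _ "\<lambda>t. H (Suc m) t"])
          using DERIV_subset[OF deriv[OF mk] sub] sub by blast
        have dif: "H m differentiable (at t)" if "z (Suc i) < t" "t < z i" for t
        proof -
          have "a < t" "t < b" using that ia by auto
          then have "(H m has_real_derivative H (Suc m) t) (at t)"
            using deriv[OF mk, of t] at_within_Icc_at[of a t b] by auto
          then show ?thesis using real_differentiable_def by blast
        qed
        obtain \<zeta> where \<zeta>: "z (Suc i) < \<zeta>" "\<zeta> < z i" "DERIV (H m) \<zeta> :> 0"
          using Rolle[OF ab _ cont dif] zz i by auto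
        have "a < \<zeta>" "\<zeta> < b" using \<zeta> ia by auto
        then have "(H m has_real_derivative H (Suc m) \<zeta>) (at \<zeta>)"
          using deriv[OF mk, of \<zeta>] at_within_Icc_at[of a \<zeta> b] by auto
        then have "H (Suc m) \<zeta> = 0" using DERIV_unique \<zeta>(3) by blast
        then show ?thesis using \<zeta> by blast
      qed
    qed
    then obtain \<zeta> where \<zeta>: "\<And>i. i < k - m \<Longrightarrow> z (Suc i) < \<zeta> i \<and> \<zeta> i < z i \<and> H (Suc m) (\<zeta> i) = 0"
      by metis
    show ?case
    proof (intro exI conjI allI impI)
      fix i assume "i \<le> k - Suc m"
      then have i: "i < k - m" using Suc.prems by auto
      then have "z (Suc i) \<in> {a..b}" "z i \<in> {a..b}" using zi by auto
      then show "\<zeta> i \<in> {a..b}" using \<zeta>[OF i] by auto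
    next
      fix i assume "i \<le> k - Suc m"
      then have i: "i < k - m" using Suc.prems by auto
      then show "H (Suc m) (\<zeta> i) = 0" using \<zeta> by auto
    next
      fix i j assume ij: "i < j" "j \<le> k - Suc m"
      then have j: "j < k - m" using Suc.prems by auto
      have "z j \<le> z (Suc i)"
      proof (cases "j = Suc i")
        case False then show ?thesis using zd ij j by (metis Suc_lessI less_imp_le_nat order.strict_implies_order)
      qed auto
      then show "\<zeta> j < \<zeta> i" using \<zeta>[OF j] \<zeta>[of i] ij j by fastforce
    qed
  qed
  from this[of k] obtain z where "z 0 \<in> {a..b}" "H k (z 0) = 0" by auto
  then show ?thesis by blast
qed

definition PP :: "(nat \<Rightarrow> real) \<Rightarrow> nat \<Rightarrow> nat \<Rightarrow> real" where
  "PP y k i = (\<Prod>l\<in>{0..k}-{i}. y i - y l)"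

definition LL :: "(nat \<Rightarrow> real) \<Rightarrow> nat \<Rightarrow> nat \<Rightarrow> real poly" where
  "LL y k i = (\<Prod>l\<in>{0..k}-{i}. [:- y l, 1:])"

lemma pderiv_iter: "degree (p::real poly) \<le> m \<Longrightarrow> (pderiv ^^ m) p = [:fact m * coeff p m:]"
proof (induction m arbitrary: p)
  case 0
  then obtain c where "p = [:c:]" using degree0_coeffs by blast
  then show ?case by simp
next
  case (Suc m)
  have "degree (pderiv p) \<le> m" using Suc.prems by (simp add: degree_pderiv)
  then have "(pderiv ^^ m) (pderiv p) = [:fact m * coeff (pderiv p) m:]" using Suc.IH by blast
  moreover have "(pderiv ^^ Suc m) p = (pderiv ^^ m) (pderiv p)" by (metis funpow_Suc_right o_apply)
  ultimately show ?case by (simp add: coeff_pderiv algebra_simps)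
qed

lemma LL_degree: "degree (LL y k i) = card ({0..k}-{i})"
  unfolding LL_def by (subst degree_prod_eq_sum_degree) auto

lemma LL_coeff: assumes "i \<le> k" shows "coeff (LL y k i) k = 1"
proof -
  have "card ({0..k}-{i}) = k" using assms by simp
  then have "coeff (LL y k i) k = lead_coeff (LL y k i)" using LL_degree by simp
  also have "\<dots> = 1" unfolding LL_def lead_coeff_prod by simp
  finally show ?thesis .
qed

lemma poly_LL: "poly (LL y k i) t = (\<Prod>l\<in>{0..k}-{i}. t - y l)"
  unfolding LL_def poly_prod by simp

lemma PP_nz: assumes "\<And>i j. i < j \<Longrightarrow> j \<le> k \<Longrightarrow> y j < y i" "i \<le> k"
  shows "PP y k i \<noteq> 0"
proof
  assume "PP y k i = 0"
  then have "\<exists>l. l \<le> k \<and> y i = y l \<and> l \<noteq> i" unfolding PP_def by (auto simp: prod_zero_iff)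
  then obtain l where "l \<le> k" "y i = y l" "l \<noteq> i" by blast
  then show False using assms by (metis less_irrefl nat_neq_iff)
qed

lemma dd_mv:
  fixes D :: "nat \<Rightarrow> real \<Rightarrow> real" and y :: "nat \<Rightarrow> real"
  assumes D0: "\<And>t. t \<in> {a..b} \<Longrightarrow> D 0 t = f t"
    and Dderiv: "\<And>m t. m < k \<Longrightarrow> t \<in> {a..b} \<Longrightarrow>
        (D m has_real_derivative D (Suc m) t) (at t within {a..b})"
    and ydec: "\<And>i j. i < j \<Longrightarrow> j \<le> k \<Longrightarrow> y j < y i"
    and yin: "\<And>i. i \<le> k \<Longrightarrow> y i \<in> {a..b}"
  shows "\<exists>\<xi>\<in>{a..b}. D k \<xi> = fact k * (\<Sum>i=0..k. f (y i) / PP y k i)"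
proof -
  define H where "H m t = D m t - (\<Sum>i=0..k. f (y i) / PP y k i * poly ((pderiv^^m) (LL y k i)) t)" for m t
  have der: "(H m has_real_derivative H (Suc m) t) (at t within {a..b})" if "m < k" "t \<in> {a..b}" for m t
    unfolding H_def
  proof (rule DERIV_diff[OF Dderiv[OF that]], rule DERIV_sum)
    fix i
    show "((\<lambda>t. f (y i) / PP y k i * poly ((pderiv ^^ m) (LL y k i)) t) has_real_derivative
        f (y i) / PP y k i * poly ((pderiv ^^ Suc m) (LL y k i)) t) (at t within {a..b})"
      by (rule DERIV_cmult, simp, rule DERIV_subset[OF poly_DERIV], simp)
  qed
  have z0: "H 0 (y j) = 0" if j: "j \<le> k" for j
  proof -
    have "(\<Sum>i=0..k. f (y i) / PP y k i * poly ((pderiv^^0) (LL y k i)) (y j))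
        = (\<Sum>i=0..k. if i = j then f (y j) else 0)"
    proof (rule sum.cong, simp)
      fix i assume i: "i \<in> {0..k}"
      show "f (y i) / PP y k i * poly ((pderiv^^0) (LL y k i)) (y j) = (if i = j then f (y j) else 0)"
      proof (cases "i = j")
        case True
        have "PP y k j \<noteq> 0" using PP_nz[of k y j] ydec j by blast
        then show ?thesis using True by (simp add: poly_LL PP_def[symmetric])
      next
        case False
        then have "(\<Prod>l\<in>{0..k}-{i}. y j - y l) = 0" using j by (intro prod_zero) auto
        then show ?thesis using False by (simp add: poly_LL)
      qed
    qed
    also have "\<dots> = f (y j)" using j by simp
    finally show ?thesis unfolding H_def using D0 yin j by simp
  qed
  have "\<exists>\<xi>\<in>{a..b}. H k \<xi> = 0"
    by (rule gen_rolle[where H=H and z=y and k=k]) (use der yin ydec z0 in auto)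
  then obtain \<xi> where \<xi>: "\<xi> \<in> {a..b}" "H k \<xi> = 0" by blast
  have "(pderiv^^k) (LL y k i) = [:fact k:]" if "i \<le> k" for i
    using pderiv_iter[of "LL y k i" k] LL_degree[of y k i] LL_coeff[OF that] that by simp
  then have "H k \<xi> = D k \<xi> - fact k * (\<Sum>i=0..k. f (y i) / PP y k i)"
    unfolding H_def by (simp add: sum_distrib_left algebra_simps)
  then show ?thesis using \<xi> by auto
qed

lemma dd_nonneg:
  fixes D :: "nat \<Rightarrow> real \<Rightarrow> real" and y :: "nat \<Rightarrow> real"
  assumes D0: "\<And>t. t \<in> {a..b} \<Longrightarrow> D 0 t = f t"
    and Dderiv: "\<And>m t. m < k \<Longrightarrow> t \<in> {a..b} \<Longrightarrow>
        (D m has_real_derivative D (Suc m) t) (at t within {a..b})"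
    and Dk: "\<And>t. t \<in> {a..b} \<Longrightarrow> D k t \<ge> 0"
    and ydec: "\<And>i j. i < j \<Longrightarrow> j \<le> k \<Longrightarrow> y j < y i"
    and yin: "\<And>i. i \<le> k \<Longrightarrow> y i \<in> {a..b}"
  shows "(\<Sum>i=0..k. f (y i) / PP y k i) \<ge> 0"
proof -
  have "\<exists>\<xi>\<in>{a..b}. D k \<xi> = fact k * (\<Sum>i=0..k. f (y i) / PP y k i)"
    by (rule dd_mv[where D=D and f=f and a=a and b=b and k=k and y=y]) (use D0 Dderiv ydec yin in auto)
  then obtain \<xi> where "\<xi> \<in> {a..b}" "D k \<xi> = fact k * (\<Sum>i=0..k. f (y i) / PP y k i)"
    by blast
  then have "fact k * (\<Sum>i=0..k. f (y i) / PP y k i) \<ge> 0" using Dk by metis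
  moreover have "fact k > (0::real)" by simp
  ultimately show ?thesis by (simp add: zero_le_mult_iff)
qed

lemma dd_poly:
  fixes y :: "nat \<Rightarrow> real" and p :: "real poly"
  assumes ydec: "\<And>i j. i < j \<Longrightarrow> j \<le> k \<Longrightarrow> y j < y i"
    and deg: "degree p < k"
  shows "(\<Sum>i=0..k. poly p (y i) / PP y k i) = 0"
proof -
  have yin: "y i \<in> {y k..y 0}" if "i \<le> k" for i
  proof -
    have "y k \<le> y i" using ydec[of i k] that by (cases "i = k") auto
    moreover have "y i \<le> y 0" using ydec[of 0 i] that by (cases "i = 0") auto
    ultimately show ?thesis by auto
  qed
  obtain \<xi> where "poly ((pderiv^^k) p) \<xi> = fact k * (\<Sum>i=0..k. poly p (y i) / PP y k i)"
  proof -
    have "\<exists>\<xi>\<in>{y k..y 0}. poly ((pderiv^^k) p) \<xi> = fact k * (\<Sum>i=0..k. poly p (y i) / PP y k i)"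
    proof (rule dd_mv[where D="\<lambda>m. poly ((pderiv^^m) p)" and f="poly p" and a="y k" and b="y 0" and k=k])
      fix m t
      show "(poly ((pderiv ^^ m) p) has_real_derivative poly ((pderiv ^^ Suc m) p) t) (at t within {y k..y 0})"
        using poly_DERIV[of "(pderiv ^^ m) p" t] by (simp add: has_field_derivative_at_within)
    qed (use ydec yin in auto)
    then show ?thesis using that by blast
  qed
  moreover have "(pderiv^^k) p = 0" using pderiv_iter[of p k] deg by (simp add: coeff_eq_0)
  ultimately show ?thesis by simp
qed

lemma annih:
  fixes x w :: "nat \<Rightarrow> real" and p :: "real poly"
  assumes mom: "\<And>j. j < k \<Longrightarrow> (\<Sum>i\<in>A. w i * x i ^ j) = 0" and deg: "degree p < k"
  shows "(\<Sum>i\<in>A. w i * poly p (x i)) = 0"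
proof -
  have "(\<Sum>i\<in>A. w i * poly p (x i)) = (\<Sum>i\<in>A. \<Sum>j\<le>degree p. coeff p j * (w i * x i ^ j))"
    unfolding poly_altdef by (simp add: sum_distrib_left mult.left_commute)
  also have "\<dots> = (\<Sum>j\<le>degree p. coeff p j * (\<Sum>i\<in>A. w i * x i ^ j))"
    by (subst sum.swap) (simp add: sum_distrib_left)
  also have "\<dots> = 0" using mom deg by simp
  finally show ?thesis .
qed

lemma main_ind:
  fixes k :: nat and a b :: real and f :: "real \<Rightarrow> real" and D :: "nat \<Rightarrow> real \<Rightarrow> real"
  assumes k_pos: "k \<ge> 1"
    and D0: "\<And>t. t \<in> {a..b} \<Longrightarrow> D 0 t = f t"
    and Dderiv: "\<And>m t. m < k \<Longrightarrow> t \<in> {a..b} \<Longrightarrow>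
        (D m has_real_derivative D (Suc m) t) (at t within {a..b})"
    and Dk_nonneg: "\<And>t. t \<in> {a..b} \<Longrightarrow> D k t \<ge> 0"
  shows "\<And>x w. \<lbrakk>\<And>i j. 1 \<le> i \<Longrightarrow> i < j \<Longrightarrow> j \<le> n \<Longrightarrow> x j < x i;
     \<And>i. 1 \<le> i \<Longrightarrow> i \<le> n \<Longrightarrow> x i \<in> {a..b};
     \<And>j. j < k \<Longrightarrow> (\<Sum>i=1..n. w i * x i ^ j) = 0;
     \<And>j. 1 \<le> j \<Longrightarrow> j \<le> n - k \<Longrightarrow>
        (\<Sum>i=1..j. w i * (\<Prod>m=1..k-1. x i - x (j + m))) \<ge> 0\<rbrakk>
     \<Longrightarrow> (\<Sum>i=1..n. w i * f (x i)) \<ge> 0"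
proof (induction n)
  case 0
  then show ?case by simp
next
  case (Suc n)
  note decr = Suc.prems(1) and range = Suc.prems(2) and mom = Suc.prems(3) and part = Suc.prems(4)
  show ?case
  proof (cases "Suc n \<le> k")
    case True
    have wz: "w i = 0" if i: "1 \<le> i" "i \<le> Suc n" for i
    proof -
      define p where "p = (\<Prod>l\<in>{1..Suc n}-{i}. [:- x l, 1:])"
      have degp: "degree p = n" unfolding p_def by (subst degree_prod_eq_sum_degree) (use i in auto)
      have "(\<Sum>m=1..Suc n. w m * poly p (x m)) = 0"
        by (rule annih[where k=k]) (use degp True mom in auto)
      moreover have "(\<Sum>m=1..Suc n. w m * poly p (x m)) = w i * (\<Prod>l\<in>{1..Suc n}-{i}. x i - x l)"
      proof -
        have "(\<Sum>m=1..Suc n. w m * poly p (x m)) = w i * poly p (x i) + (\<Sum>m\<in>{1..Suc n}-{i}. w m * poly p (x m))"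
          using i by (subst sum.remove[of _ i]) auto
        also have "(\<Sum>m\<in>{1..Suc n}-{i}. w m * poly p (x m)) = 0"
        proof (rule sum.neutral, rule ballI)
          fix m assume m: "m \<in> {1..Suc n}-{i}"
          have "poly p (x m) = (\<Prod>l\<in>{1..Suc n}-{i}. x m - x l)" unfolding p_def poly_prod by simp
          also have "\<dots> = 0" using m by (intro prod_zero) auto
          finally show "w m * poly p (x m) = 0" by simp
        qed
        finally show ?thesis unfolding p_def poly_prod by simp
      qed
      moreover have "(\<Prod>l\<in>{1..Suc n}-{i}. x i - x l) \<noteq> 0"
      proof
        assume "(\<Prod>l\<in>{1..Suc n}-{i}. x i - x l) = 0"
        then have "\<exists>l. l \<in> {1..Suc n}-{i} \<and> x i = x l" by (auto simp: prod_zero_iff)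
        then obtain l where l: "l \<in> {1..Suc n}-{i}" "x i = x l" by blast
        then show False using decr[of i l] decr[of l i] i by (cases "i < l") auto
      qed
      ultimately show ?thesis by simp
    qed
    then show ?thesis by simp
  next
    case False
    then have kn: "k \<le> n" by simp
    define y where "y r = x (Suc r)" for r
    define Q where "Q = (\<Prod>m=1..k-1. x 1 - x (1+m))"
    define X where "X = x 1 - x (k+1)"
    define c where "c = w 1 * Q"
    define e where "e i = (if 1 \<le> i \<and> i \<le> k+1 then c * X / PP y k (i-1) else 0)" for i
    define w' where "w' i = w i - e i" for i
    have ydec: "\<And>i j. i < j \<Longrightarrow> j \<le> k \<Longrightarrow> y j < y i"
      unfolding y_def using decr kn by auto
    have yin: "\<And>i. i \<le> k \<Longrightarrow> y i \<in> {a..b}"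
      unfolding y_def using range kn by auto
    obtain k' where k': "k = Suc k'" using k_pos by (cases k) auto
    have PP0: "PP y k 0 = Q * X"
    proof -
      have "{0..k}-{0} = insert (Suc k') {1..k'}" using k' by auto
      then have "PP y k 0 = (x 1 - x (Suc (Suc k'))) * (\<Prod>l\<in>{1..k'}. x 1 - x (Suc l))"
        unfolding PP_def y_def by simp
      then show ?thesis unfolding Q_def X_def k' by simp
    qed
    have PP0nz: "PP y k 0 \<noteq> 0" using PP_nz[of k y 0] ydec by blast
    have e1: "e 1 = w 1" unfolding e_def c_def using PP0 PP0nz by simp
    have w'1: "w' 1 = 0" unfolding w'_def e1 by simp
    have Esum: "(\<Sum>i=1..M. e i * g i) = c * X * (\<Sum>r=0..k. g (Suc r) / PP y k r)"
      if M: "M \<ge> k+1" for M g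
    proof -
      have "(\<Sum>i=1..M. e i * g i) = (\<Sum>i=1..k+1. e i * g i)"
        by (rule sum.mono_neutral_right) (use M in \<open>auto simp: e_def\<close>)
      also have "\<dots> = (\<Sum>r=0..k. e (Suc r) * g (Suc r))"
        using sum.shift_bounds_cl_Suc_ivl[of "\<lambda>i. e i * g i" 0 k] by simp
      also have "\<dots> = (\<Sum>r=0..k. c * X * (g (Suc r) / PP y k r))"
        by (rule sum.cong) (auto simp: e_def)
      finally show ?thesis by (simp add: sum_distrib_left)
    qed
    have shiftsum: "(\<Sum>i=1..M-1. w' (Suc i) * g (Suc i)) = (\<Sum>i=1..M. w' i * g i)"
      if M: "1 \<le> M" for M g
    proof -
      have "(\<Sum>i=1..M. w' i * g i) = w' 1 * g 1 + (\<Sum>i=Suc 1..M. w' i * g i)"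
        using M by (subst sum.atLeast_Suc_atMost) auto
      also have "(\<Sum>i=Suc 1..M. w' i * g i) = (\<Sum>i=1..M-1. w' (Suc i) * g (Suc i))"
        using sum.shift_bounds_cl_Suc_ivl[of "\<lambda>i. w' i * g i" 1 "M-1"] M by simp
      finally show ?thesis using w'1 by simp
    qed
    have split: "(\<Sum>i=1..M. w' i * g i) = (\<Sum>i=1..M. w i * g i) - (\<Sum>i=1..M. e i * g i)" for M g
      by (simp add: w'_def algebra_simps sum_subtractf)
    have IH: "(\<Sum>i=1..n. w' (Suc i) * f (x (Suc i))) \<ge> 0"
    proof (rule Suc.IH[where x="\<lambda>i. x (Suc i)" and w="\<lambda>i. w' (Suc i)"])
      fix i j assume "1 \<le> i" "i < j" "j \<le> n"
      then show "x (Suc j) < x (Suc i)" using decr by auto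
    next
      fix i assume "1 \<le> i" "i \<le> n"
      then show "x (Suc i) \<in> {a..b}" using range by auto
    next
      fix j assume j: "j < k"
      have "(\<Sum>i=1..n. w' (Suc i) * x (Suc i) ^ j) = (\<Sum>i=1..Suc n. w' i * x i ^ j)"
        using shiftsum[of "Suc n" "\<lambda>i. x i ^ j"] by simp
      also have "\<dots> = 0 - c * X * (\<Sum>r=0..k. x (Suc r) ^ j / PP y k r)"
        unfolding split using mom[OF j] Esum[of "Suc n" "\<lambda>i. x i ^ j"] kn by simp
      also have "(\<Sum>r=0..k. x (Suc r) ^ j / PP y k r) = 0"
      proof -
        have "(\<Sum>r=0..k. poly (monom 1 j) (y r) / PP y k r) = 0"
          by (rule dd_poly[OF ydec]) (use j in \<open>auto simp: degree_monom_eq\<close>)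
        then show ?thesis by (simp add: poly_monom y_def)
      qed
      finally show "(\<Sum>i=1..n. w' (Suc i) * x (Suc i) ^ j) = 0" by simp
    next
      fix j assume j: "1 \<le> j" "j \<le> n - k"
      define J where "J = Suc j"
      define g where "g i = (\<Prod>m=1..k-1. x i - x (J + m))" for i
      have "(\<Sum>i=1..j. w' (Suc i) * (\<Prod>m=1..k-1. x (Suc i) - x (Suc (j + m))))
          = (\<Sum>i=1..J-1. w' (Suc i) * g (Suc i))" unfolding g_def J_def by simp
      also have "\<dots> = (\<Sum>i=1..J. w i * g i) - (\<Sum>i=1..J. e i * g i)"
        unfolding split[symmetric] by (rule shiftsum) (simp add: J_def)
      finally have eq1: "(\<Sum>i=1..j. w' (Suc i) * (\<Prod>m=1..k-1. x (Suc i) - x (Suc (j + m))))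
          = (\<Sum>i=1..J. w i * g i) - (\<Sum>i=1..J. e i * g i)" .
      have E0: "(\<Sum>i=1..J. e i * g i) = 0"
      proof -
        have "(\<Sum>i=1..J. e i * g i) = (\<Sum>i=1..J+k-1. e i * g i)"
        proof (rule sum.mono_neutral_left)
          show "finite {1..J+k-1}" by simp
          show "{1..J} \<subseteq> {1..J+k-1}" using k_pos by auto
        next
          show "\<forall>i\<in>{1..J+k-1} - {1..J}. e i * g i = 0"
          proof
          fix i assume i: "i \<in> {1..J+k-1} - {1..J}"
          have m: "i - J \<in> {1..k-1}" "J + (i - J) = i" using i by auto
          have "g i = 0" unfolding g_def
            by (intro prod_zero finite_atLeastAtMost bexI[OF _ m(1)]) (simp add: m(2))
          then show "e i * g i = 0" by simp
          qed
        qed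
        also have "\<dots> = c * X * (\<Sum>r=0..k. g (Suc r) / PP y k r)"
          by (rule Esum) (use j in \<open>simp add: J_def\<close>)
        also have "(\<Sum>r=0..k. g (Suc r) / PP y k r) = 0"
        proof -
          define q where "q = (\<Prod>m\<in>{1..k-1}. [:- x (J+m), 1:])"
          have "degree q = k - 1" unfolding q_def by (subst degree_prod_eq_sum_degree) auto
          then have "(\<Sum>r=0..k. poly q (y r) / PP y k r) = 0"
            using k_pos by (intro dd_poly[OF ydec]) auto
          then show ?thesis unfolding q_def poly_prod g_def y_def by simp
        qed
        finally show ?thesis by simp
      qed
      have P0: "(\<Sum>i=1..J. w i * g i) \<ge> 0"
        unfolding g_def using part[of J] j kn by (simp add: J_def)
      show "(\<Sum>i=1..j. w' (Suc i) * (\<Prod>m=1..k-1. x (Suc i) - x (Suc (j + m)))) \<ge> 0"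
        using eq1 E0 P0 by simp
    qed
    have "(\<Sum>i=1..Suc n. w i * f (x i)) = (\<Sum>i=1..Suc n. w' i * f (x i)) + (\<Sum>i=1..Suc n. e i * f (x i))"
      using split[where M="Suc n" and g="\<lambda>i. f (x i)"] by simp
    also have "(\<Sum>i=1..Suc n. w' i * f (x i)) = (\<Sum>i=1..n. w' (Suc i) * f (x (Suc i)))"
      using shiftsum[of "Suc n" "\<lambda>i. f (x i)"] by simp
    also have "(\<Sum>i=1..Suc n. e i * f (x i)) = c * X * (\<Sum>r=0..k. f (y r) / PP y k r)"
      using Esum[of "Suc n" "\<lambda>i. f (x i)"] kn by (simp add: y_def)
    finally have eq: "(\<Sum>i=1..Suc n. w i * f (x i)) = (\<Sum>i=1..n. w' (Suc i) * f (x (Suc i))) + c * X * (\<Sum>r=0..k. f (y r) / PP y k r)" .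
    have c0: "c \<ge> 0" using part[of 1] kn unfolding c_def Q_def by simp
    have X0: "X \<ge> 0" using decr[of 1 "k+1"] kn k_pos unfolding X_def by simp
    have dd0: "(\<Sum>r=0..k. f (y r) / PP y k r) \<ge> 0"
      by (rule dd_nonneg[where D=D and a=a and b=b]) (use D0 Dderiv Dk_nonneg ydec yin in auto)
    show ?thesis unfolding eq using IH c0 X0 dd0 by (simp add: mult_nonneg_nonneg)
  qed
qed

theorem mainTheorem10:
  fixes k n :: nat and a b :: real and x w :: "nat \<Rightarrow> real"
    and f :: "real \<Rightarrow> real" and D :: "nat \<Rightarrow> real \<Rightarrow> real"
  assumes k_pos: "k \<ge> 1"
    and decr: "\<And>i j. 1 \<le> i \<Longrightarrow> i < j \<Longrightarrow> j \<le> n \<Longrightarrow> x j < x i"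
    and range: "\<And>i. 1 \<le> i \<Longrightarrow> i \<le> n \<Longrightarrow> x i \<in> {a..b}"
    and moments: "\<And>j. j < k \<Longrightarrow> (\<Sum>i=1..n. w i * x i ^ j) = 0"
    and partial: "\<And>j. 1 \<le> j \<Longrightarrow> j \<le> n - k \<Longrightarrow>
        (\<Sum>i=1..j. w i * (\<Prod>m=1..k-1. x i - x (j + m))) \<ge> 0"
    and D0: "\<And>t. t \<in> {a..b} \<Longrightarrow> D 0 t = f t"
    and Dderiv: "\<And>m t. m < k \<Longrightarrow> t \<in> {a..b} \<Longrightarrow>
        (D m has_real_derivative D (Suc m) t) (at t within {a..b})"
    and Dk_nonneg: "\<And>t. t \<in> {a..b} \<Longrightarrow> D k t \<ge> 0"
  shows "(\<Sum>i=1..n. w i * f (x i)) \<ge> 0"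
  by (rule main_ind[where k=k and f=f and D=D and a=a and b=b and n=n and x=x and w=w])
     (use k_pos D0 Dderiv Dk_nonneg decr range moments partial in auto)

end
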